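(* Let $H$ be a Kekul\'ean hexagonal system. Then $\zeta(H,x)=C(R(H),x)$, i.e. $z(H,i)=\alpha_i(R(H))$ for every $i\ge 0$.
   Context: A hexagonal system is a 2-connected finite plane graph in which every interior face is a regular hexagon of side length one (equivalently, a cycle of the infinite hexagonal lattice together with its interior); its hexagons are the boundaries of its interior faces. It is Kekul\'ean if it has a perfect matching. A Clar cover of $H$ is a spanning subgraph of $H$ each of whose components is either a hexagon of $H$ or a single edge ($K_2$). Let $z(H,k)$ be the number of Clar covers of $H$ with exactly $k$ hexagon components, and $Cl(H)$ the maximum such $k$. The Clar covering polynomial is $\zeta(H,x)=\sum_{k=0}^{Cl(H)} z(H,k)x^k$. The resonance graph $R(H)$ has the perfect matchings of $H$ as vertices, two being adjacent iff their symmetric difference is the edge set of a hexagon of $H$. For a graph $G$, the cube polynomial is $C(G,x)=\sum_{i\ge0}\alpha_i(G)x^i$, where $\alpha_i(G)$ is the number of induced subgraphs of $G$ isomorphic to the $i$-dimensional hypercube $Q_i$. *)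

theory Defs
  imports Main
begin

text \<open>We use the standard brick-wall embedding of the hexagonal (honeycomb) lattice:
vertices are integer points; horizontal edges join (x,y) and (x+1,y); vertical edges
join (x,y) and (x,y+1) when x+y is even.  Its bounded faces (hexagons) are the bricks
with lower-left corner (x,y), x+y even.  This plane graph is isomorphic (as a plane graph)
to the hexagonal lattice of regular unit hexagons.\<close>

type_synonym vert = "int \<times> int"
type_synonym edge = "vert set"

definition lat_adj :: "vert \<Rightarrow> vert \<Rightarrow> bool" where
  "lat_adj u v \<longleftrightarrow>
     (snd u = snd v \<and> (fst v = fst u + 1 \<or> fst u = fst v + 1)) \<or>
     (fst u = fst v \<and> ((snd v = snd u + 1 \<and> even (fst u + snd u)) \<or>
                        (snd u = snd v + 1 \<and> even (fst v + snd v))))"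

definition is_cell :: "vert \<Rightarrow> bool" where
  "is_cell c \<longleftrightarrow> even (fst c + snd c)"

definition hex_edges :: "vert \<Rightarrow> edge set" where
  "hex_edges c = (case c of (x, y) \<Rightarrow>
     {{(x,y),(x+1,y)}, {(x+1,y),(x+2,y)}, {(x,y+1),(x+1,y+1)}, {(x+1,y+1),(x+2,y+1)},
      {(x,y),(x,y+1)}, {(x+2,y),(x+2,y+1)}})"

definition hex_verts :: "vert \<Rightarrow> vert set" where
  "hex_verts c = \<Union> (hex_edges c)"

definition lattice_cycle :: "vert list \<Rightarrow> bool" where
  "lattice_cycle vs \<longleftrightarrow> length vs \<ge> 3 \<and> distinct vs \<and>
     (\<forall>i < length vs. lat_adj (vs ! i) (vs ! ((i + 1) mod length vs)))"

definition cyc_edges :: "vert list \<Rightarrow> edge set" where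
  "cyc_edges vs = {{vs ! i, vs ! ((i + 1) mod length vs)} | i. i < length vs}"

text \<open>A cell lies in the interior of the cycle iff the set of cells reachable from it
without crossing the cycle is finite (the exterior region is unbounded).\<close>

definition cell_step :: "edge set \<Rightarrow> vert \<Rightarrow> vert \<Rightarrow> bool" where
  "cell_step C h h' \<longleftrightarrow> is_cell h \<and> is_cell h' \<and> h \<noteq> h' \<and>
     (\<exists>e. e \<in> hex_edges h \<and> e \<in> hex_edges h' \<and> e \<notin> C)"

definition inner_cell :: "edge set \<Rightarrow> vert \<Rightarrow> bool" where
  "inner_cell C h \<longleftrightarrow> is_cell h \<and> finite {h'. (cell_step C)\<^sup>*\<^sup>* h h'}"

text \<open>The hexagonal system determined by a lattice cycle: the cycle together with its
interior.  Vertices, edges and hexagons (each hexagon given by its edge set).\<close>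

definition hs_hex :: "vert list \<Rightarrow> edge set set" where
  "hs_hex vs = hex_edges ` {h. inner_cell (cyc_edges vs) h}"

definition hs_E :: "vert list \<Rightarrow> edge set" where
  "hs_E vs = cyc_edges vs \<union> \<Union> (hs_hex vs)"

definition hs_V :: "vert list \<Rightarrow> vert set" where
  "hs_V vs = set vs \<union> \<Union> (hs_E vs)"

definition perfect_matching :: "'a set \<Rightarrow> 'a set set \<Rightarrow> 'a set set \<Rightarrow> bool" where
  "perfect_matching V E M \<longleftrightarrow> M \<subseteq> E \<and> (\<forall>v\<in>V. \<exists>!e. e \<in> M \<and> v \<in> e)"

definition kekulean :: "'a set \<Rightarrow> 'a set set \<Rightarrow> bool" where
  "kekulean V E \<longleftrightarrow> (\<exists>M. perfect_matching V E M)"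

definition comp_verts :: "'a set set \<Rightarrow> 'a \<Rightarrow> 'a set" where
  "comp_verts F v = {u. (\<lambda>a b. {a, b} \<in> F)\<^sup>*\<^sup>* v u}"

definition comp_edges :: "'a set set \<Rightarrow> 'a \<Rightarrow> 'a set set" where
  "comp_edges F v = {e \<in> F. e \<subseteq> comp_verts F v}"

definition clar_cover :: "'a set \<Rightarrow> 'a set set \<Rightarrow> 'a set set set \<Rightarrow> 'a set set \<Rightarrow> bool" where
  "clar_cover V E Hx F \<longleftrightarrow> F \<subseteq> E \<and>
     (\<forall>v\<in>V. (comp_edges F v \<in> Hx \<and> comp_verts F v = \<Union> (comp_edges F v)) \<or>
             (\<exists>a b. a \<noteq> b \<and> comp_verts F v = {a, b} \<and> comp_edges F v = {{a, b}}))"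

definition hex_components :: "'a set \<Rightarrow> 'a set set set \<Rightarrow> 'a set set \<Rightarrow> 'a set set set" where
  "hex_components V Hx F = {comp_edges F v | v. v \<in> V \<and> comp_edges F v \<in> Hx}"

definition clar_number_z :: "'a set \<Rightarrow> 'a set set \<Rightarrow> 'a set set set \<Rightarrow> nat \<Rightarrow> nat" where
  "clar_number_z V E Hx k = card {F. clar_cover V E Hx F \<and> card (hex_components V Hx F) = k}"

definition res_verts :: "'a set \<Rightarrow> 'a set set \<Rightarrow> 'a set set set" where
  "res_verts V E = {M. perfect_matching V E M}"

definition res_adj :: "'a set set set \<Rightarrow> 'a set set \<Rightarrow> 'a set set \<Rightarrow> bool" where
  "res_adj Hx M M' \<longleftrightarrow> (M - M') \<union> (M' - M) \<in> Hx"

definition cube_adj :: "nat set \<Rightarrow> nat set \<Rightarrow> bool" where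
  "cube_adj A B \<longleftrightarrow> card ((A - B) \<union> (B - A)) = 1"

definition cube_count :: "'v set \<Rightarrow> ('v \<Rightarrow> 'v \<Rightarrow> bool) \<Rightarrow> nat \<Rightarrow> nat" where
  "cube_count VG adj i = card {S. S \<subseteq> VG \<and>
      (\<exists>f. bij_betw f (Pow {..<i}) S \<and>
           (\<forall>A\<in>Pow {..<i}. \<forall>B\<in>Pow {..<i}. cube_adj A B \<longleftrightarrow> adj (f A) (f B)))}"

end

theory Submission
  imports Defs
begin


definition is_hex :: "'a set set \<Rightarrow> bool" where
  "is_hex h \<longleftrightarrow> (\<exists>a b c d e f. distinct [a,b,c,d,e,f] \<and>
      h = {{a,b},{b,c},{c,d},{d,e},{e,f},{f,a}})"

definition alt :: "'a set set \<Rightarrow> 'a set set \<Rightarrow> bool" where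
  "alt h N \<longleftrightarrow> N \<subseteq> h \<and> (\<forall>v\<in>\<Union>h. \<exists>!e. e \<in> N \<and> v \<in> e)"

lemma hex_card: assumes "is_hex h" shows "finite h" "card h = 6"
proof -
  obtain a b c d e f where d: "distinct [a,b,c,d,e,f]" and h: "h = {{a,b},{b,c},{c,d},{d,e},{e,f},{f,a}}"
    using assms(1) unfolding is_hex_def by blast
  show "finite h" using h by simp
  show "card h = 6" using d unfolding h by (auto simp: doubleton_eq_iff card_insert_if)
qed

lemma hex_edge2: assumes "is_hex h" "e \<in> h" shows "\<exists>x y. x \<noteq> y \<and> e = {x,y}"
proof -
  obtain a b c d ee f where d: "distinct [a,b,c,d,ee,f]" and h: "h = {{a,b},{b,c},{c,d},{d,ee},{ee,f},{f,a}}"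
    using assms(1) unfolding is_hex_def by blast
  show ?thesis using assms(2) d unfolding h by auto
qed

lemma hex_two: assumes "is_hex h" "v \<in> \<Union>h"
  shows "\<exists>e1 e2. e1 \<in> h \<and> e2 \<in> h \<and> e1 \<noteq> e2 \<and> v \<in> e1 \<and> v \<in> e2 \<and> (\<forall>e\<in>h. v \<in> e \<longrightarrow> e = e1 \<or> e = e2)"
proof -
  obtain a b c d ee f where d: "distinct [a,b,c,d,ee,f]" and h: "h = {{a,b},{b,c},{c,d},{d,ee},{ee,f},{f,a}}"
    using assms(1) unfolding is_hex_def by blast
  have "v = a \<or> v = b \<or> v = c \<or> v = d \<or> v = ee \<or> v = f" using assms(2) h by auto
  then show ?thesis
  proof (elim disjE)
    assume "v = a" then show ?thesis using d h by (intro exI[of _ "{a,b}"] exI[of _ "{f,a}"]) (auto simp: doubleton_eq_iff)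
  next
    assume "v = b" then show ?thesis using d h by (intro exI[of _ "{a,b}"] exI[of _ "{b,c}"]) (auto simp: doubleton_eq_iff)
  next
    assume "v = c" then show ?thesis using d h by (intro exI[of _ "{b,c}"] exI[of _ "{c,d}"]) (auto simp: doubleton_eq_iff)
  next
    assume "v = d" then show ?thesis using d h by (intro exI[of _ "{c,d}"] exI[of _ "{d,ee}"]) (auto simp: doubleton_eq_iff)
  next
    assume "v = ee" then show ?thesis using d h by (intro exI[of _ "{d,ee}"] exI[of _ "{ee,f}"]) (auto simp: doubleton_eq_iff)
  next
    assume "v = f" then show ?thesis using d h by (intro exI[of _ "{ee,f}"] exI[of _ "{f,a}"]) (auto simp: doubleton_eq_iff)
  qed
qed

lemma hex_conn: assumes "is_hex h" "h \<subseteq> F" "v \<in> \<Union>h" "w \<in> \<Union>h"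
  shows "(\<lambda>x y. {x,y} \<in> F)\<^sup>*\<^sup>* v w"
proof -
  obtain a b c d ee f where d: "distinct [a,b,c,d,ee,f]" and h: "h = {{a,b},{b,c},{c,d},{d,ee},{ee,f},{f,a}}"
    using assms(1) unfolding is_hex_def by blast
  let ?R = "\<lambda>x y. {x,y} \<in> F"
  have sym: "?R x y \<Longrightarrow> ?R y x" for x y by (simp add: insert_commute)
  have s: "?R a b" "?R b c" "?R c d" "?R d ee" "?R ee f" using assms(2) h by auto
  have ra: "?R\<^sup>*\<^sup>* a x" if "x \<in> \<Union>h" for x
  proof -
    have 1: "?R\<^sup>*\<^sup>* a b" using s by auto
    have 2: "?R\<^sup>*\<^sup>* a c" using 1 s(2) by (rule rtranclp.rtrancl_into_rtrancl)
    have 3: "?R\<^sup>*\<^sup>* a d" using 2 s(3) by (rule rtranclp.rtrancl_into_rtrancl)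
    have 4: "?R\<^sup>*\<^sup>* a ee" using 3 s(4) by (rule rtranclp.rtrancl_into_rtrancl)
    have 5: "?R\<^sup>*\<^sup>* a f" using 4 s(5) by (rule rtranclp.rtrancl_into_rtrancl)
    have "x = a \<or> x = b \<or> x = c \<or> x = d \<or> x = ee \<or> x = f" using that h by auto
    then show ?thesis using 1 2 3 4 5 by auto
  qed
  have "?R\<^sup>*\<^sup>* v a"
  proof -
    have "?R\<^sup>*\<^sup>* a v" using ra assms(3) .
    then show ?thesis
      by (induction rule: rtranclp_induct) (auto intro: rtranclp.rtrancl_into_rtrancl converse_rtranclp_into_rtranclp dest: sym)
  qed
  then show ?thesis using ra[OF assms(4)] by (rule rtranclp_trans)
qed

lemma alt_xor: assumes "alt h N" "e1 \<in> h" "e2 \<in> h" "e1 \<noteq> e2" "v \<in> e1" "v \<in> e2"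
  "\<forall>e\<in>h. v \<in> e \<longrightarrow> e = e1 \<or> e = e2"
  shows "(e1 \<in> N) \<noteq> (e2 \<in> N)"
proof -
  have "v \<in> \<Union>h" using assms by auto
  then obtain e where e: "e \<in> N" "v \<in> e" and u: "\<And>e'. e' \<in> N \<Longrightarrow> v \<in> e' \<Longrightarrow> e' = e"
    using assms(1) unfolding alt_def by metis
  have "e \<in> h" using e assms(1) unfolding alt_def by auto
  then have "e = e1 \<or> e = e2" using assms(7) e by auto
  then show ?thesis using e u assms by metis
qed

lemma hex_alt_ex: assumes "is_hex h" shows "\<exists>N. alt h N"
proof -
  obtain a b c d ee f where d: "distinct [a,b,c,d,ee,f]" and h: "h = {{a,b},{b,c},{c,d},{d,ee},{ee,f},{f,a}}"
    using assms(1) unfolding is_hex_def by blast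
  have "alt h {{a,b},{c,d},{ee,f}}" unfolding alt_def h using d
    by (auto simp: doubleton_eq_iff)
  then show ?thesis by blast
qed

lemma hex_alt_dich: assumes "is_hex h" "alt h N1" "alt h N2" shows "N1 = N2 \<or> N1 = h - N2"
proof -
  obtain a b c d ee f where d: "distinct [a,b,c,d,ee,f]" and h: "h = {{a,b},{b,c},{c,d},{d,ee},{ee,f},{f,a}}"
    using assms(1) unfolding is_hex_def by blast
  have ne: "{a,b} \<noteq> {b,c}" "{b,c} \<noteq> {c,d}" "{c,d} \<noteq> {d,ee}" "{d,ee} \<noteq> {ee,f}" "{ee,f} \<noteq> {f,a}" "{f,a} \<noteq> {a,b}"
    using d by (auto simp: doubleton_eq_iff)
  have P: "N = {{a,b},{c,d},{ee,f}} \<or> N = {{b,c},{d,ee},{f,a}}" if "alt h N" for N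
  proof -
    have x1: "({a,b} \<in> N) \<noteq> ({b,c} \<in> N)"
      by (rule alt_xor[OF that, of _ _ b]) (use h d ne in auto)
    have x2: "({b,c} \<in> N) \<noteq> ({c,d} \<in> N)"
      by (rule alt_xor[OF that, of _ _ c]) (use h d ne in auto)
    have x3: "({c,d} \<in> N) \<noteq> ({d,ee} \<in> N)"
      by (rule alt_xor[OF that, of _ _ d]) (use h d ne in auto)
    have x4: "({d,ee} \<in> N) \<noteq> ({ee,f} \<in> N)"
      by (rule alt_xor[OF that, of _ _ ee]) (use h d ne in auto)
    have x5: "({ee,f} \<in> N) \<noteq> ({f,a} \<in> N)"
      by (rule alt_xor[OF that, of _ _ f]) (use h d ne in auto)
    have sub: "N \<subseteq> h" using that unfolding alt_def by blast
    show ?thesis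
    proof (cases "{a,b} \<in> N")
      case True
      then have m: "{a,b} \<in> N" "{b,c} \<notin> N" "{c,d} \<in> N" "{d,ee} \<notin> N" "{ee,f} \<in> N" "{f,a} \<notin> N"
        using x1 x2 x3 x4 x5 by auto
      have "N = {{a,b},{c,d},{ee,f}}"
      proof (rule set_eqI, rule iffI)
        fix x assume "x \<in> N"
        then have "x \<in> h" using sub by blast
        then have "x = {a,b} \<or> x = {b,c} \<or> x = {c,d} \<or> x = {d,ee} \<or> x = {ee,f} \<or> x = {f,a}" unfolding h by simp
        then show "x \<in> {{a,b},{c,d},{ee,f}}" using m \<open>x \<in> N\<close> by auto
      qed (use m in auto)
      then show ?thesis ..
    next
      case False
      then have m: "{a,b} \<notin> N" "{b,c} \<in> N" "{c,d} \<notin> N" "{d,ee} \<in> N" "{ee,f} \<notin> N" "{f,a} \<in> N"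
        using x1 x2 x3 x4 x5 by auto
      have "N = {{b,c},{d,ee},{f,a}}"
      proof (rule set_eqI, rule iffI)
        fix x assume "x \<in> N"
        then have "x \<in> h" using sub by blast
        then have "x = {a,b} \<or> x = {b,c} \<or> x = {c,d} \<or> x = {d,ee} \<or> x = {ee,f} \<or> x = {f,a}" unfolding h by simp
        then show "x \<in> {{b,c},{d,ee},{f,a}}" using m \<open>x \<in> N\<close> by auto
      qed (use m in auto)
      then show ?thesis ..
    qed
  qed
  have c1: "h - {{a,b},{c,d},{ee,f}} = {{b,c},{d,ee},{f,a}}" unfolding h using d by (auto simp: doubleton_eq_iff)
  have c2: "h - {{b,c},{d,ee},{f,a}} = {{a,b},{c,d},{ee,f}}" unfolding h using d by (auto simp: doubleton_eq_iff)
  from P[OF assms(2)] P[OF assms(3)] show ?thesis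
  proof (elim disjE)
    assume "N1 = {{a,b},{c,d},{ee,f}}" "N2 = {{b,c},{d,ee},{f,a}}"
    then show ?thesis using c2 by (intro disjI2) simp
  next
    assume "N1 = {{b,c},{d,ee},{f,a}}" "N2 = {{a,b},{c,d},{ee,f}}"
    then show ?thesis using c1 by (intro disjI2) simp
  qed simp_all
qed




definition sd :: "'a set \<Rightarrow> 'a set \<Rightarrow> 'a set" where "sd X Y = (X - Y) \<union> (Y - X)"

lemma sd_self[simp]: "sd X X = {}" by (auto simp: sd_def)
lemma sd_empty[simp]: "sd X {} = X" by (auto simp: sd_def)
lemma sd_cancel[simp]: "sd X (sd X Y) = Y" by (auto simp: sd_def)
lemma sd_comm: "sd X Y = sd Y X" by (auto simp: sd_def)
lemma sd_assoc: "sd (sd X Y) Z = sd X (sd Y Z)" by (auto simp: sd_def)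
lemma sd_empty_iff: "sd X Y = {} \<longleftrightarrow> X = Y" by (auto simp: sd_def)
lemma sd_disj: "X \<inter> Y = {} \<Longrightarrow> sd X Y = X \<union> Y" by (auto simp: sd_def)
lemma sd_eq_imp: "sd X Y = Z \<Longrightarrow> Y = sd X Z" by (auto simp: sd_def)
lemma mem_sd: "x \<in> sd X Y \<longleftrightarrow> (x \<in> X) \<noteq> (x \<in> Y)" by (auto simp: sd_def)
lemma res_adj_sd: "res_adj Hx M M' \<longleftrightarrow> sd M M' \<in> Hx" by (simp add: res_adj_def sd_def)
lemma cube_adj_sd: "cube_adj A B \<longleftrightarrow> card (sd A B) = 1" by (simp add: cube_adj_def sd_def)

lemma comp_sub:
  assumes "v \<in> X" "\<And>a c. a \<in> X \<Longrightarrow> {a,c} \<in> F \<Longrightarrow> c \<in> X"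
  shows "comp_verts F v \<subseteq> X"
proof
  fix u assume "u \<in> comp_verts F v"
  then have "(\<lambda>a b. {a,b} \<in> F)\<^sup>*\<^sup>* v u" by (simp add: comp_verts_def)
  then show "u \<in> X" by (induction rule: rtranclp_induct) (use assms in auto)
qed

lemma cv_self: "v \<in> comp_verts F v" by (simp add: comp_verts_def)

lemma cv_step: "u \<in> comp_verts F v \<Longrightarrow> {u,w} \<in> F \<Longrightarrow> w \<in> comp_verts F v"
  unfolding comp_verts_def by (auto intro: rtranclp.rtrancl_into_rtrancl)

lemma rtranclp_sym_edge:
  assumes "(\<lambda>a b. {a,b} \<in> F)\<^sup>*\<^sup>* x y" shows "(\<lambda>a b. {a,b} \<in> F)\<^sup>*\<^sup>* y x"
  using assms
proof (induction rule: rtranclp_induct)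
  case base then show ?case by simp
next
  case (step y z)
  have "{z,y} \<in> F" using step(2) by (simp add: insert_commute)
  then show ?case using step(3) by (rule converse_rtranclp_into_rtranclp)
qed

lemma cv_sym: assumes "u \<in> comp_verts F v" shows "comp_verts F u = comp_verts F v"
proof -
  have uv: "(\<lambda>a b. {a,b} \<in> F)\<^sup>*\<^sup>* v u" using assms by (simp add: comp_verts_def)
  have vu: "(\<lambda>a b. {a,b} \<in> F)\<^sup>*\<^sup>* u v" using rtranclp_sym_edge[OF uv] .
  show ?thesis unfolding comp_verts_def using uv vu by (auto intro: rtranclp_trans)
qed

lemma ce_sym: "u \<in> comp_verts F v \<Longrightarrow> comp_edges F u = comp_edges F v"
  unfolding comp_edges_def using cv_sym by metis

lemma edge_in_ce:
  assumes "e \<in> F" "e = {x,y}" "v \<in> e"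
  shows "e \<in> comp_edges F v"
proof -
  have "x \<in> comp_verts F v \<and> y \<in> comp_verts F v"
  proof (cases "v = x")
    case True
    then show ?thesis using assms cv_self[of v F] cv_step[of v F v y] by auto
  next
    case False
    then have "v = y" using assms by auto
    moreover have "{y,x} \<in> F" using assms by (simp add: insert_commute)
    ultimately show ?thesis using cv_self[of v F] cv_step[of v F v x] by auto
  qed
  then show ?thesis using assms unfolding comp_edges_def by auto
qed

definition UH :: "(nat \<Rightarrow> 'a set set) \<Rightarrow> nat set \<Rightarrow> 'a set set" where "UH hs A = \<Union>(hs ` A)"
definition gmap :: "'a set set \<Rightarrow> (nat \<Rightarrow> 'a set set) \<Rightarrow> nat set \<Rightarrow> 'a set set" where
  "gmap M0 hs A = sd M0 (UH hs A)"
definition FFof :: "'a set set \<Rightarrow> (nat \<Rightarrow> 'a set set) \<Rightarrow> nat \<Rightarrow> 'a set set" where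
  "FFof M0 hs k = M0 \<union> UH hs {..<k}"

locale hsys =
  fixes V :: "'a set" and E :: "'a set set" and Hx :: "'a set set set"
  assumes E2: "\<And>e. e \<in> E \<Longrightarrow> \<exists>x y. x \<noteq> y \<and> e = {x,y}"
    and EV: "\<And>e. e \<in> E \<Longrightarrow> e \<subseteq> V"
    and Hhex: "\<And>h. h \<in> Hx \<Longrightarrow> is_hex h"
    and HE: "\<And>h. h \<in> Hx \<Longrightarrow> h \<subseteq> E"
    and Hshare: "\<And>h h'. h \<in> Hx \<Longrightarrow> h' \<in> Hx \<Longrightarrow> h \<noteq> h' \<Longrightarrow> card (h \<inter> h') \<le> 1"
    and Hfin: "finite Hx"
begin

lemma pm_sub: "perfect_matching V E M \<Longrightarrow> M \<subseteq> E" by (simp add: perfect_matching_def)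
lemma pm_ex: "perfect_matching V E M \<Longrightarrow> v \<in> V \<Longrightarrow> \<exists>e\<in>M. v \<in> e"
  unfolding perfect_matching_def by blast
lemma pm_un: "perfect_matching V E M \<Longrightarrow> v \<in> V \<Longrightarrow> e \<in> M \<Longrightarrow> v \<in> e \<Longrightarrow> e' \<in> M \<Longrightarrow> v \<in> e' \<Longrightarrow> e = e'"
  unfolding perfect_matching_def by blast

lemma hexV: "h \<in> Hx \<Longrightarrow> v \<in> \<Union>h \<Longrightarrow> v \<in> V" using HE EV by blast
lemma E_ne: "e \<in> E \<Longrightarrow> \<exists>v. v \<in> e" using E2 by blast

lemma hex_ne: assumes "h \<in> Hx" shows "\<exists>v. v \<in> \<Union>h"
proof -
  have "card h = 6" using hex_card Hhex assms by blast
  then have "h \<noteq> {}" by auto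
  then obtain e where "e \<in> h" by blast
  then show ?thesis using E_ne HE assms by blast
qed

lemma hex_card6: "h \<in> Hx \<Longrightarrow> card h = 6" using hex_card Hhex by blast
lemma hex_fin: "h \<in> Hx \<Longrightarrow> finite h" using hex_card Hhex by blast

lemma at_hex:
  assumes M: "perfect_matching V E M" and M1: "perfect_matching V E (sd M h)" and h: "h \<in> Hx"
    and v: "v \<in> \<Union>h" and e: "e \<in> M" "v \<in> e"
  shows "e \<in> h"
proof (rule ccontr)
  assume ne: "e \<notin> h"
  have vV: "v \<in> V" using hexV h v .
  obtain e1 e2 where t: "e1 \<in> h" "e2 \<in> h" "e1 \<noteq> e2" "v \<in> e1" "v \<in> e2"
    using hex_two[OF Hhex[OF h] v] by blast
  have "e1 \<notin> M"
  proof
    assume "e1 \<in> M" then have "e = e1" using pm_un[OF M vV e] t by blast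
    then show False using ne t by simp
  qed
  then have "e1 \<in> sd M h" using t by (simp add: sd_def)
  moreover have "e \<in> sd M h" using e ne by (simp add: sd_def)
  ultimately have "e1 = e" using pm_un[OF M1 vV] t e by blast
  then show False using t ne by simp
qed

lemma square:
  assumes h1: "sd M M1 \<in> Hx" and h2: "sd M M2 \<in> Hx" and h3: "sd M1 M3 \<in> Hx" and h4: "sd M2 M3 \<in> Hx"
    and n12: "M1 \<noteq> M2" and n03: "M \<noteq> M3"
  shows "sd M2 M3 = sd M M1"
proof -
  define a where "a = sd M M1"
  define b where "b = sd M M2"
  define c where "c = sd M1 M3"
  define d where "d = sd M2 M3"
  have eq: "sd a c = sd b d" unfolding a_def b_def c_def d_def by (auto simp: sd_def)
  have ab: "b \<noteq> a"
  proof
    assume "b = a" then have "sd M (sd M M1) = sd M (sd M M2)" unfolding a_def b_def by simp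
    then show False using n12 by simp
  qed
  have bd: "b \<noteq> d"
  proof
    assume "b = d"
    then have "sd M2 M = sd M2 M3" unfolding b_def d_def by (simp add: sd_comm)
    then have "sd M2 (sd M2 M) = sd M2 (sd M2 M3)" by simp
    then show False using n03 by simp
  qed
  have bc: "b = c"
  proof (rule ccontr)
    assume bc: "b \<noteq> c"
    have fa: "finite a" "finite b" "finite c" "finite d" using hex_fin h1 h2 h3 h4
      unfolding a_def b_def c_def d_def by auto
    have c6: "card b = 6" using hex_card6 h2 unfolding b_def by simp
    have s1: "card (b \<inter> a) \<le> 1" using Hshare[of b a] h1 h2 ab unfolding a_def b_def by simp
    have s2: "card (b \<inter> c) \<le> 1" using Hshare[of b c] h3 h2 bc unfolding c_def b_def by simp
    have s3: "card (b \<inter> d) \<le> 1" using Hshare[of b d] h4 h2 bd unfolding d_def b_def by simp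
    have sub: "b - d \<subseteq> (b \<inter> a) \<union> (b \<inter> c)"
    proof
      fix x assume x: "x \<in> b - d"
      then have "x \<in> sd b d" by (simp add: sd_def)
      then have "x \<in> sd a c" using eq by simp
      then show "x \<in> (b \<inter> a) \<union> (b \<inter> c)" using x by (auto simp: sd_def)
    qed
    have "card (b - d) = card b - card (b \<inter> d)" using fa by (simp add: card_Diff_subset_Int)
    then have "card (b - d) \<ge> 5" using c6 s3 by simp
    moreover have "card (b - d) \<le> card ((b \<inter> a) \<union> (b \<inter> c))" using sub fa by (simp add: card_mono)
    moreover have "card ((b \<inter> a) \<union> (b \<inter> c)) \<le> card (b \<inter> a) + card (b \<inter> c)" by (rule card_Un_le)
    ultimately show False using s1 s2 by simp
  qed
  have "d = sd b (sd b d)" by simp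
  also have "\<dots> = sd b (sd a b)" using eq bc by simp
  also have "\<dots> = a" by (auto simp: sd_def)
  finally show ?thesis unfolding a_def d_def .
qed

lemma hex_disj:
  assumes M: "perfect_matching V E M" and M1: "perfect_matching V E (sd M h1)"
    and M2: "perfect_matching V E (sd M h2)" and M12: "perfect_matching V E (sd (sd M h1) h2)"
    and h: "h1 \<in> Hx" "h2 \<in> Hx" "h1 \<noteq> h2"
  shows "\<Union>h1 \<inter> \<Union>h2 = {}"
proof (rule ccontr)
  assume "\<Union>h1 \<inter> \<Union>h2 \<noteq> {}"
  then obtain v where v: "v \<in> \<Union>h1" "v \<in> \<Union>h2" by blast
  have vV: "v \<in> V" using hexV h(1) v(1) by blast
  obtain e where e: "e \<in> M" "v \<in> e" using pm_ex[OF M vV] by blast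
  have e1: "e \<in> h1" using at_hex[OF M M1 h(1) v(1) e] .
  have e2: "e \<in> h2" using at_hex[OF M M2 h(2) v(2) e] .
  obtain u where u: "u \<in> e" "u \<noteq> v" using hex_edge2[OF Hhex[OF h(1)] e1] e(2) by blast
  have uV: "u \<in> V" using hexV h(1) e1 u(1) by blast
  obtain f1 where f1: "f1 \<in> sd M h1" "u \<in> f1" using pm_ex[OF M1 uV] by blast
  have "e \<notin> sd M h1" using e(1) e1 by (simp add: sd_def)
  then have fe: "f1 \<noteq> e" using f1 by blast
  have f1h1: "f1 \<in> h1"
  proof (rule ccontr)
    assume "f1 \<notin> h1" then have "f1 \<in> M" using f1(1) by (simp add: sd_def)
    then have "f1 = e" using pm_un[OF M uV _ f1(2) e(1) u(1)] by blast
    then show False using fe by simp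
  qed
  have u2: "u \<in> \<Union>h2" using u(1) e2 by blast
  have f1h2: "f1 \<in> h2" using at_hex[OF M1 M12 h(2) u2 f1] .
  have "{e, f1} \<subseteq> h1 \<inter> h2" using e1 e2 f1h1 f1h2 by blast
  moreover have "card {e, f1} = 2" using fe by simp
  moreover have "finite (h1 \<inter> h2)" using hex_fin[OF h(1)] by blast
  ultimately have "2 \<le> card (h1 \<inter> h2)" by (metis card_mono)
  then show False using Hshare[OF h] by simp
qed

end



locale core = hsys +
  fixes M0 :: "'a set set" and hs :: "nat \<Rightarrow> 'a set set" and k :: nat
  assumes G1: "perfect_matching V E M0"
    and G2: "\<And>j. j < k \<Longrightarrow> hs j \<in> Hx"
    and G3: "\<And>j l. j < k \<Longrightarrow> l < k \<Longrightarrow> j \<noteq> l \<Longrightarrow> \<Union>(hs j) \<inter> \<Union>(hs l) = {}"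
    and G4: "\<And>j e v. j < k \<Longrightarrow> e \<in> M0 \<Longrightarrow> v \<in> \<Union>(hs j) \<Longrightarrow> v \<in> e \<Longrightarrow> e \<in> hs j"
begin

abbreviation "FF \<equiv> FFof M0 hs k"
abbreviation "g \<equiv> gmap M0 hs"

lemma uniq_hex: assumes "j < k" "l < k" "x \<in> hs j" "x \<in> hs l" shows "j = l"
proof (rule ccontr)
  assume "j \<noteq> l"
  obtain v where "v \<in> x" using E_ne HE G2 assms by blast
  then show False using G3[OF assms(1,2) \<open>j \<noteq> l\<close>] assms by blast
qed

lemma edisj: "j < k \<Longrightarrow> l < k \<Longrightarrow> j \<noteq> l \<Longrightarrow> hs j \<inter> hs l = {}"
  using uniq_hex by blast

lemma FF_E: "FF \<subseteq> E" using pm_sub[OF G1] HE G2 by (auto simp: FFof_def UH_def)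

lemma M0FF: "M0 \<subseteq> FF" by (auto simp: FFof_def)

lemma FA: assumes "e \<in> FF" "v \<in> e" "v \<in> \<Union>(hs j)" "j < k" shows "e \<in> hs j"
proof -
  have "e \<in> M0 \<or> (\<exists>l<k. e \<in> hs l)" using assms(1) by (auto simp: FFof_def UH_def)
  then show ?thesis
  proof
    assume "e \<in> M0" then show ?thesis using G4 assms by blast
  next
    assume "\<exists>l<k. e \<in> hs l"
    then obtain l where l: "l < k" "e \<in> hs l" by blast
    then have "v \<in> \<Union>(hs l)" using assms(2) by blast
    then have "l = j" using G3[OF l(1) assms(4)] assms(3) by blast
    then show ?thesis using l by simp
  qed
qed

lemma mem_UH: assumes "j < k" "x \<in> hs j" "C \<subseteq> {..<k}" shows "x \<in> UH hs C \<longleftrightarrow> j \<in> C"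
  using assms uniq_hex unfolding UH_def by blast

lemma mem_UH_out: assumes "C \<subseteq> {..<k}" "\<forall>j<k. x \<notin> hs j" shows "x \<notin> UH hs C"
  using assms unfolding UH_def by blast

lemma mem_g: assumes "j < k" "x \<in> hs j" "A \<subseteq> {..<k}" shows "x \<in> g A \<longleftrightarrow> ((x \<in> M0) \<noteq> (j \<in> A))"
  using mem_UH[OF assms] unfolding gmap_def by (simp add: mem_sd)

lemma mem_g_out: assumes "A \<subseteq> {..<k}" "\<forall>j<k. x \<notin> hs j" shows "x \<in> g A \<longleftrightarrow> x \<in> M0"
  using mem_UH_out[OF assms] unfolding gmap_def by (simp add: mem_sd)

lemma g_sub: "A \<subseteq> {..<k} \<Longrightarrow> g A \<subseteq> FF"
  unfolding gmap_def FFof_def UH_def sd_def by blast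

lemma g_pm: assumes A: "A \<subseteq> {..<k}" shows "perfect_matching V E (g A)"
  unfolding perfect_matching_def
proof (intro conjI ballI)
  show "g A \<subseteq> E" using g_sub[OF A] FF_E by blast
  fix v assume vV: "v \<in> V"
  obtain e0 where e0: "e0 \<in> M0" "v \<in> e0" using pm_ex[OF G1 vV] by blast
  show "\<exists>!e. e \<in> g A \<and> v \<in> e"
  proof (cases "\<exists>j<k. v \<in> \<Union>(hs j)")
    case True
    then obtain j where j: "j < k" "v \<in> \<Union>(hs j)" by blast
    have e0h: "e0 \<in> hs j" using G4[OF j(1) e0(1) j(2) e0(2)] .
    obtain e1 e2 where t: "e1 \<in> hs j" "e2 \<in> hs j" "e1 \<noteq> e2" "v \<in> e1" "v \<in> e2"
      "\<forall>e\<in>hs j. v \<in> e \<longrightarrow> e = e1 \<or> e = e2"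
      using hex_two[OF Hhex[OF G2[OF j(1)]] j(2)] by blast
    have "\<exists>e'. e' \<in> hs j \<and> v \<in> e' \<and> e' \<noteq> e0 \<and> (\<forall>e\<in>hs j. v \<in> e \<longrightarrow> e = e0 \<or> e = e')"
    proof (cases "e0 = e1")
      case True then show ?thesis using t by (intro exI[of _ e2]) auto
    next
      case False
      then have "e0 = e2" using t e0h e0 by blast
      then show ?thesis using t False by (intro exI[of _ e1]) auto
    qed
    then obtain e' where e': "e' \<in> hs j" "v \<in> e'" "e' \<noteq> e0" "\<forall>e\<in>hs j. v \<in> e \<longrightarrow> e = e0 \<or> e = e'"
      by blast
    have e'M: "e' \<notin> M0" using pm_un[OF G1 vV e0] e' by blast
    have all: "x = e0 \<or> x = e'" if "x \<in> g A" "v \<in> x" for x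
    proof -
      have "x \<in> hs j" using FA[of x v j] g_sub[OF A] j that by blast
      then show ?thesis using e'(4) that by blast
    qed
    show ?thesis
    proof (cases "j \<in> A")
      case True
      have "e' \<in> g A" using mem_g[OF j(1) e'(1) A] e'M True by simp
      moreover have "e0 \<notin> g A" using mem_g[OF j(1) e0h A] e0(1) True by simp
      ultimately show ?thesis using all e'(2) by blast
    next
      case False
      have "e' \<notin> g A" using mem_g[OF j(1) e'(1) A] e'M False by simp
      moreover have "e0 \<in> g A" using mem_g[OF j(1) e0h A] e0(1) False by simp
      ultimately show ?thesis using all e0(2) by blast
    qed
  next
    case False
    have e0o: "\<forall>j<k. e0 \<notin> hs j" using False e0(2) by blast
    have "e0 \<in> g A" using mem_g_out[OF A e0o] e0(1) by simp
    moreover have "x = e0" if "x \<in> g A" "v \<in> x" for x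
    proof -
      have "\<forall>j<k. x \<notin> hs j" using False that(2) by blast
      then have "x \<in> M0" using mem_g_out[OF A] that(1) by blast
      then show ?thesis using pm_un[OF G1 vV _ that(2) e0] by blast
    qed
    ultimately show ?thesis using e0(2) by blast
  qed
qed

lemma sd_g: assumes A: "A \<subseteq> {..<k}" and B: "B \<subseteq> {..<k}" shows "sd (g A) (g B) = UH hs (sd A B)"
proof (rule set_eqI)
  fix x
  have D: "sd A B \<subseteq> {..<k}" using A B by (auto simp: sd_def)
  show "x \<in> sd (g A) (g B) \<longleftrightarrow> x \<in> UH hs (sd A B)"
  proof (cases "\<exists>j<k. x \<in> hs j")
    case True
    then obtain j where j: "j < k" "x \<in> hs j" by blast
    show ?thesis using mem_g[OF j A] mem_g[OF j B] mem_UH[OF j D] by (auto simp: mem_sd)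
  next
    case False
    then show ?thesis using mem_g_out[OF A] mem_g_out[OF B] mem_UH_out[OF D] by (auto simp: mem_sd)
  qed
qed

lemma UH_single: "UH hs {j} = hs j" by (simp add: UH_def)

lemma adj_g: assumes A: "A \<subseteq> {..<k}" and B: "B \<subseteq> {..<k}"
  shows "sd (g A) (g B) \<in> Hx \<longleftrightarrow> card (sd A B) = 1"
proof -
  define D where "D = sd A B"
  have D: "D \<subseteq> {..<k}" using A B by (auto simp: sd_def D_def)
  have fD: "finite D" using D finite_subset by blast
  have "UH hs D \<in> Hx \<longleftrightarrow> card D = 1"
  proof
    assume c: "card D = 1"
    then obtain j where "D = {j}" by (rule card_1_singletonE)
    then show "UH hs D \<in> Hx" using D G2 by (simp add: UH_single)
  next
    assume U: "UH hs D \<in> Hx"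
    show "card D = 1"
    proof (rule ccontr)
      assume c: "card D \<noteq> 1"
      show False
      proof (cases "D = {}")
        case True
        then have "UH hs D = {}" by (simp add: UH_def)
        then show False using hex_card6[OF U] by simp
      next
        case False
        then obtain j where j: "j \<in> D" by blast
        have "D \<noteq> {j}" using c by auto
        then obtain l where l: "l \<in> D" "l \<noteq> j" using j by blast
        have jl: "j < k" "l < k" using j l D by auto
        have sub: "hs j \<union> hs l \<subseteq> UH hs D" using j l by (auto simp: UH_def)
        have "card (hs j \<union> hs l) = 12"
          using card_Un_disjoint[OF hex_fin[OF G2[OF jl(1)]] hex_fin[OF G2[OF jl(2)]] edisj[OF jl l(2)[symmetric]]]
            hex_card6[OF G2[OF jl(1)]] hex_card6[OF G2[OF jl(2)]] by simp
        moreover have "card (hs j \<union> hs l) \<le> card (UH hs D)" using card_mono[OF hex_fin[OF U] sub] .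
        ultimately show False using hex_card6[OF U] by simp
      qed
    qed
  qed
  then show ?thesis using sd_g[OF A B] by (simp add: D_def)
qed

lemma g_inj: "inj_on g (Pow {..<k})"
proof (rule inj_onI)
  fix A B assume A: "A \<in> Pow {..<k}" and B: "B \<in> Pow {..<k}" and eq: "g A = g B"
  have "UH hs (sd A B) = {}" using sd_g[of A B] A B eq by simp
  then have "sd A B = {}"
  proof -
    assume U: "UH hs (sd A B) = {}"
    show "sd A B = {}"
    proof (rule ccontr)
      assume "sd A B \<noteq> {}"
      then obtain j where j: "j \<in> sd A B" by blast
      then have "j < k" using A B by (auto simp: sd_def)
      then obtain v where "v \<in> \<Union>(hs j)" using hex_ne G2 by blast
      then show False using U j by (auto simp: UH_def)
    qed
  qed
  then show "A = B" by (simp add: sd_empty_iff)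
qed

end



context core begin

lemma altN: assumes j: "j < k" and N: "perfect_matching V E N" "N \<subseteq> FF"
  shows "alt (hs j) (N \<inter> hs j)"
  unfolding alt_def
proof (intro conjI ballI)
  show "N \<inter> hs j \<subseteq> hs j" by blast
  fix v assume v: "v \<in> \<Union>(hs j)"
  have vV: "v \<in> V" using hexV[OF G2[OF j] v] .
  obtain e where e: "e \<in> N" "v \<in> e" using pm_ex[OF N(1) vV] by blast
  have "e \<in> hs j" using FA[of e v j] e N(2) j v by blast
  then show "\<exists>!e. e \<in> N \<inter> hs j \<and> v \<in> e" using e pm_un[OF N(1) vV] by blast
qed

lemma pms_FF: "{M. perfect_matching V E M \<and> M \<subseteq> FF} = g ` Pow {..<k}"
proof
  show "g ` Pow {..<k} \<subseteq> {M. perfect_matching V E M \<and> M \<subseteq> FF}"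
    using g_pm g_sub by blast
next
  show "{M. perfect_matching V E M \<and> M \<subseteq> FF} \<subseteq> g ` Pow {..<k}"
  proof
    fix M assume "M \<in> {M. perfect_matching V E M \<and> M \<subseteq> FF}"
    then have M: "perfect_matching V E M" "M \<subseteq> FF" by auto
    define A where "A = {j. j < k \<and> M \<inter> hs j \<noteq> M0 \<inter> hs j}"
    have A: "A \<subseteq> {..<k}" by (auto simp: A_def)
    have "M = g A"
    proof (rule set_eqI)
      fix x
      show "x \<in> M \<longleftrightarrow> x \<in> g A"
      proof (cases "\<exists>j<k. x \<in> hs j")
        case True
        then obtain j where j: "j < k" "x \<in> hs j" by blast
        have d: "M \<inter> hs j = M0 \<inter> hs j \<or> M \<inter> hs j = hs j - M0 \<inter> hs j"
          using hex_alt_dich[OF Hhex[OF G2[OF j(1)]] altN[OF j(1) M] altN[OF j(1) G1 M0FF]] .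
        show ?thesis
        proof (cases "j \<in> A")
          case True
          then have "M \<inter> hs j \<noteq> M0 \<inter> hs j" by (simp add: A_def)
          then have "M \<inter> hs j = hs j - M0 \<inter> hs j" using d by blast
          then have "x \<in> M \<longleftrightarrow> x \<notin> M0" using j(2) by blast
          then show ?thesis using mem_g[OF j(1) j(2) A] True by simp
        next
          case False
          then have "M \<inter> hs j = M0 \<inter> hs j" using j(1) by (simp add: A_def)
          then have "x \<in> M \<longleftrightarrow> x \<in> M0" using j(2) by blast
          then show ?thesis using mem_g[OF j(1) j(2) A] False by simp
        qed
      next
        case False
        then have gx: "x \<in> g A \<longleftrightarrow> x \<in> M0" using mem_g_out[OF A] by blast
        show ?thesis
        proof
          assume "x \<in> M" then have "x \<in> FF" using M by blast
          then show "x \<in> g A" using gx False by (auto simp: FFof_def UH_def)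
        next
          assume "x \<in> g A" then have x0: "x \<in> M0" using gx by simp
          then obtain y where y: "y \<in> x" using E_ne pm_sub[OF G1] by blast
          have yV: "y \<in> V" using EV pm_sub[OF G1] x0 y by blast
          have yn: "\<forall>j<k. y \<notin> \<Union>(hs j)" using G4 x0 y False by blast
          obtain e where e: "e \<in> M" "y \<in> e" using pm_ex[OF M(1) yV] by blast
          have "e \<in> FF" using e M by blast
          moreover have "\<forall>j<k. e \<notin> hs j" using yn e(2) by blast
          ultimately have "e \<in> M0" by (auto simp: FFof_def UH_def)
          then have "e = x" using pm_un[OF G1 yV] e(2) x0 y by blast
          then show "x \<in> M" using e by simp
        qed
      qed
    qed
    then show "M \<in> g ` Pow {..<k}" using A by blast
  qed
qed

lemma union_g: "\<Union>(g ` Pow {..<k}) = FF"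
proof
  show "\<Union>(g ` Pow {..<k}) \<subseteq> FF" using g_sub by blast
next
  show "FF \<subseteq> \<Union>(g ` Pow {..<k})"
  proof
    fix x assume x: "x \<in> FF"
    have g0: "g {} = M0" by (simp add: gmap_def UH_def)
    show "x \<in> \<Union>(g ` Pow {..<k})"
    proof (cases "x \<in> M0")
      case True then show ?thesis using g0 by (metis Pow_bottom UN_I image_eqI)
    next
      case False
      then obtain j where j: "j < k" "x \<in> hs j" using x by (auto simp: FFof_def UH_def)
      have "x \<in> g {j}" using mem_g[OF j] j(1) False by simp
      moreover have "{j} \<in> Pow {..<k}" using j by simp
      ultimately show ?thesis by blast
    qed
  qed
qed

lemma comp_hex: assumes j: "j < k" and v: "v \<in> \<Union>(hs j)"
  shows "comp_verts FF v = \<Union>(hs j)" "comp_edges FF v = hs j"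
proof -
  have hF: "hs j \<subseteq> FF" using j by (auto simp: FFof_def UH_def)
  show cv: "comp_verts FF v = \<Union>(hs j)"
  proof
    show "comp_verts FF v \<subseteq> \<Union>(hs j)"
    proof (rule comp_sub[OF v])
      fix a c assume "a \<in> \<Union>(hs j)" "{a,c} \<in> FF"
      then have "{a,c} \<in> hs j" using FA[of "{a,c}" a j] j by blast
      then show "c \<in> \<Union>(hs j)" by blast
    qed
  next
    show "\<Union>(hs j) \<subseteq> comp_verts FF v"
      using hex_conn[OF Hhex[OF G2[OF j]] hF v] by (auto simp: comp_verts_def)
  qed
  show "comp_edges FF v = hs j"
  proof
    show "comp_edges FF v \<subseteq> hs j"
    proof
      fix e assume "e \<in> comp_edges FF v"
      then have e: "e \<in> FF" "e \<subseteq> \<Union>(hs j)" using cv by (auto simp: comp_edges_def)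
      obtain y where "y \<in> e" using E_ne FF_E e(1) by blast
      then show "e \<in> hs j" using FA[of e y j] e j by blast
    qed
  next
    show "hs j \<subseteq> comp_edges FF v" using hF cv by (auto simp: comp_edges_def)
  qed
qed

lemma comp_out: assumes vV: "v \<in> V" and nv: "\<forall>j<k. v \<notin> \<Union>(hs j)"
  shows "\<exists>b. b \<noteq> v \<and> comp_verts FF v = {v,b} \<and> comp_edges FF v = {{v,b}}"
proof -
  obtain e0 where e0: "e0 \<in> M0" "v \<in> e0" using pm_ex[OF G1 vV] by blast
  obtain x y where xy: "x \<noteq> y" "e0 = {x,y}" using E2 pm_sub[OF G1] e0(1) by blast
  obtain b where b: "b \<noteq> v" "e0 = {v,b}"
    using xy e0(2) by (metis insertE insert_commute singletonD)
  have bV: "b \<in> V" using EV pm_sub[OF G1] e0(1) b by blast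
  have nb: "\<forall>j<k. b \<notin> \<Union>(hs j)"
  proof (intro allI impI notI)
    fix j assume "j < k" "b \<in> \<Union>(hs j)"
    then have "e0 \<in> hs j" using G4 e0(1) b by blast
    then show False using nv e0(2) \<open>j < k\<close> by blast
  qed
  have only: "x = {v,b}" if "x \<in> FF" "v \<in> x \<or> b \<in> x" for x
  proof -
    have "\<forall>j<k. x \<notin> hs j" using nv nb that(2) by blast
    then have xM: "x \<in> M0" using that(1) by (auto simp: FFof_def UH_def)
    show ?thesis using that(2)
    proof
      assume "v \<in> x" then show ?thesis using pm_un[OF G1 vV xM _ e0(1) e0(2)] b by blast
    next
      assume "b \<in> x" then show ?thesis using pm_un[OF G1 bV xM _ e0(1)] b by blast
    qed
  qed
  have e0F: "{v,b} \<in> FF" using e0 b M0FF by blast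
  have cv: "comp_verts FF v = {v,b}"
  proof
    show "comp_verts FF v \<subseteq> {v,b}"
    proof (rule comp_sub)
      show "v \<in> {v,b}" by simp
      fix a c assume "a \<in> {v,b}" "{a,c} \<in> FF"
      then have "{a,c} = {v,b}" using only by blast
      then show "c \<in> {v,b}" by blast
    qed
  next
    show "{v,b} \<subseteq> comp_verts FF v" using cv_self[of v FF] cv_step[OF cv_self e0F] by auto
  qed
  have ce: "comp_edges FF v = {{v,b}}"
  proof
    show "comp_edges FF v \<subseteq> {{v,b}}"
    proof
      fix e assume "e \<in> comp_edges FF v"
      then have e: "e \<in> FF" "e \<subseteq> {v,b}" using cv by (auto simp: comp_edges_def)
      obtain y where "y \<in> e" using E_ne FF_E e(1) by blast
      then have "v \<in> e \<or> b \<in> e" using e(2) by blast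
      then show "e \<in> {{v,b}}" using only e(1) by blast
    qed
  next
    show "{{v,b}} \<subseteq> comp_edges FF v" using e0F cv by (auto simp: comp_edges_def)
  qed
  show ?thesis using b cv ce by blast
qed

lemma FF_clar: "clar_cover V E Hx FF"
  unfolding clar_cover_def
proof (intro conjI ballI)
  show "FF \<subseteq> E" using FF_E .
  fix v assume vV: "v \<in> V"
  show "(comp_edges FF v \<in> Hx \<and> comp_verts FF v = \<Union>(comp_edges FF v)) \<or>
        (\<exists>a b. a \<noteq> b \<and> comp_verts FF v = {a,b} \<and> comp_edges FF v = {{a,b}})"
  proof (cases "\<exists>j<k. v \<in> \<Union>(hs j)")
    case True
    then obtain j where j: "j < k" "v \<in> \<Union>(hs j)" by blast
    show ?thesis using comp_hex[OF j] G2[OF j(1)] by auto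
  next
    case False
    then show ?thesis using comp_out[OF vV] by blast
  qed
qed

lemma hexcomp: "hex_components V Hx FF = hs ` {..<k}"
proof
  show "hex_components V Hx FF \<subseteq> hs ` {..<k}"
  proof
    fix h assume "h \<in> hex_components V Hx FF"
    then obtain v where v: "v \<in> V" "h = comp_edges FF v" "h \<in> Hx" by (auto simp: hex_components_def)
    show "h \<in> hs ` {..<k}"
    proof (cases "\<exists>j<k. v \<in> \<Union>(hs j)")
      case True
      then obtain j where j: "j < k" "v \<in> \<Union>(hs j)" by blast
      have "h = hs j" using comp_hex(2)[OF j] v(2) by simp
      then show ?thesis using j(1) by blast
    next
      case False
      then obtain b where b: "comp_edges FF v = {{v,b}}" using comp_out[OF v(1)] by blast
      have "card h = 1" using b v(2) by simp
      then show ?thesis using hex_card6[OF v(3)] by simp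
    qed
  qed
next
  show "hs ` {..<k} \<subseteq> hex_components V Hx FF"
  proof
    fix h assume "h \<in> hs ` {..<k}"
    then obtain j where j: "j < k" "h = hs j" by blast
    obtain v where v: "v \<in> \<Union>(hs j)" using hex_ne G2[OF j(1)] by blast
    have vV: "v \<in> V" using hexV[OF G2[OF j(1)] v] .
    have ce: "comp_edges FF v = h" using comp_hex(2)[OF j(1) v] j(2) by simp
    have hH: "h \<in> Hx" using G2[OF j(1)] j(2) by simp
    have "\<exists>w. h = comp_edges FF w \<and> w \<in> V \<and> comp_edges FF w \<in> Hx"
      using ce vV hH by metis
    then show "h \<in> hex_components V Hx FF" unfolding hex_components_def by simp
  qed
qed

lemma hs_inj: "inj_on hs {..<k}"
proof (rule inj_onI)
  fix j l assume "j \<in> {..<k}" "l \<in> {..<k}" "hs j = hs l"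
  then show "j = l" using G3[of j l] hex_ne[OF G2[of j]] by auto
qed

lemma card_hexcomp: "card (hex_components V Hx FF) = k"
  using hexcomp card_image[OF hs_inj] by simp

lemma cube: "{M. perfect_matching V E M \<and> M \<subseteq> FF} \<in>
  {S. S \<subseteq> res_verts V E \<and> (\<exists>f. bij_betw f (Pow {..<k}) S \<and>
      (\<forall>A\<in>Pow {..<k}. \<forall>B\<in>Pow {..<k}. cube_adj A B \<longleftrightarrow> res_adj Hx (f A) (f B)))}"
proof -
  have "bij_betw g (Pow {..<k}) (g ` Pow {..<k})" using g_inj by (simp add: bij_betw_def)
  moreover have "\<forall>A\<in>Pow {..<k}. \<forall>B\<in>Pow {..<k}. cube_adj A B \<longleftrightarrow> res_adj Hx (g A) (g B)"
    using adj_g by (simp add: cube_adj_sd res_adj_sd)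
  ultimately show ?thesis unfolding pms_FF by (auto simp: res_verts_def intro: g_pm)
qed

end



context hsys begin

lemma cube_core:
  assumes Ssub: "S \<subseteq> res_verts V E" and bij: "bij_betw f (Pow {..<i}) S"
    and adj: "\<forall>A\<in>Pow {..<i}. \<forall>B\<in>Pow {..<i}. cube_adj A B \<longleftrightarrow> res_adj Hx (f A) (f B)"
  shows "\<exists>M0 hs. core V E Hx M0 hs i \<and> S = gmap M0 hs ` Pow {..<i}"
proof -
  have pm: "perfect_matching V E (f A)" if "A \<subseteq> {..<i}" for A
    using bij Ssub that by (auto simp: bij_betw_def res_verts_def)
  have inj: "A = B" if "A \<subseteq> {..<i}" "B \<subseteq> {..<i}" "f A = f B" for A B
    using bij that by (auto simp: bij_betw_def inj_on_def)
  have adj': "sd (f A) (f B) \<in> Hx" if "A \<subseteq> {..<i}" "B \<subseteq> {..<i}" "card (sd A B) = 1" for A B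
    using adj that by (simp add: cube_adj_sd res_adj_sd)
  have ins1: "card (sd A (insert j A)) = 1" if "j \<notin> A" for j A
  proof -
    have "sd A (insert j A) = {j}" using that by (auto simp: sd_def)
    then show ?thesis by simp
  qed
  define M0 where "M0 = f {}"
  define hs where "hs j = sd M0 (f {j})" for j
  have par: "sd (f A) (f (insert j A)) = hs j"
    if "finite A" "A \<subseteq> {..<i}" "j < i" "j \<notin> A" for A j
    using that
  proof (induction A rule: finite_induct)
    case empty then show ?case by (simp add: hs_def M0_def)
  next
    case (insert a A)
    have a: "a < i" "a \<noteq> j" "A \<subseteq> {..<i}" "j \<notin> A" "a \<notin> A" using insert by auto
    have IH: "sd (f A) (f (insert j A)) = hs j" by (rule insert.IH) (use a insert.prems in auto)
    have s1: "insert j A \<subseteq> {..<i}" "insert a A \<subseteq> {..<i}" "insert j (insert a A) \<subseteq> {..<i}"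
      using a insert.prems by auto
    have "sd (f (insert a A)) (f (insert j (insert a A))) = sd (f A) (f (insert j A))"
    proof (rule square)
      show "sd (f A) (f (insert j A)) \<in> Hx" using adj'[OF a(3) s1(1) ins1[OF a(4)]] .
      show "sd (f A) (f (insert a A)) \<in> Hx" using adj'[OF a(3) s1(2) ins1[OF a(5)]] .
      have e: "insert j (insert a A) = insert a (insert j A)" by auto
      have na: "a \<notin> insert j A" using a by auto
      have s4: "insert a (insert j A) \<subseteq> {..<i}" using s1(3) e by simp
      have "sd (f (insert j A)) (f (insert a (insert j A))) \<in> Hx" using adj'[OF s1(1) s4 ins1[OF na]] .
      then show "sd (f (insert j A)) (f (insert j (insert a A))) \<in> Hx" using e by simp
      have "j \<notin> insert a A" using a by auto
      then show "sd (f (insert a A)) (f (insert j (insert a A))) \<in> Hx" using adj'[OF s1(2) s1(3) ins1] by blast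
      show "f (insert j A) \<noteq> f (insert a A)"
      proof
        assume "f (insert j A) = f (insert a A)"
        then have "insert j A = insert a A" using inj[OF s1(1) s1(2)] by blast
        then show False using a by blast
      qed
      show "f A \<noteq> f (insert j (insert a A))"
      proof
        assume "f A = f (insert j (insert a A))"
        then have "A = insert j (insert a A)" using inj[OF a(3) s1(3)] by blast
        then show False using a by blast
      qed
    qed
    then show ?case using IH by simp
  qed
  have step: "f (insert j A) = sd (f A) (hs j)"
    if "finite A" "A \<subseteq> {..<i}" "j < i" "j \<notin> A" for A j
    using sd_eq_imp[OF par[OF that]] .
  have hsH: "hs j \<in> Hx" if "j < i" for j
  proof -
    have "card (sd {} {j}) = 1" by (simp add: sd_def)
    then show ?thesis using adj'[of "{}" "{j}"] that by (simp add: hs_def M0_def)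
  qed
  have f1: "f {j} = sd M0 (hs j)" for j by (simp add: hs_def)
  have pm0: "perfect_matching V E M0" using pm[of "{}"] by (simp add: M0_def)
  have pm1: "perfect_matching V E (sd M0 (hs j))" if "j < i" for j
    using pm[of "{j}"] that f1 by simp
  have hne: "hs j \<noteq> hs l" if "j < i" "l < i" "j \<noteq> l" for j l
  proof
    assume eq: "hs j = hs l"
    have "f (insert l {j}) = sd (f {j}) (hs l)" using step[of "{j}" l] that by simp
    also have "\<dots> = M0" using eq f1 by (simp add: sd_assoc)
    finally have "f (insert l {j}) = f {}" by (simp add: M0_def)
    then have "insert l {j} = {}" using inj[of "insert l {j}" "{}"] that by simp
    then show False by simp
  qed
  have G3: "\<Union>(hs j) \<inter> \<Union>(hs l) = {}" if "j < i" "l < i" "j \<noteq> l" for j l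
  proof (rule hex_disj[OF pm0 pm1[OF that(1)] pm1[OF that(2)] _ hsH[OF that(1)] hsH[OF that(2)] hne[OF that]])
    have "f (insert l {j}) = sd (f {j}) (hs l)" using step[of "{j}" l] that by simp
    then show "perfect_matching V E (sd (sd M0 (hs j)) (hs l))"
      using pm[of "insert l {j}"] that f1 by simp
  qed
  have G4: "e \<in> hs j" if "j < i" "e \<in> M0" "v \<in> \<Union>(hs j)" "v \<in> e" for j e v
    using at_hex[OF pm0 pm1[OF that(1)] hsH[OF that(1)] that(3) that(2) that(4)] .
  have Cax: "core V E Hx M0 hs i"
    apply (rule core.intro[OF hsys_axioms])
    apply (rule core_axioms.intro)
       apply (rule pm0)
      apply (erule hsH)
     apply (erule (2) G3)
    apply (erule (3) G4)
    done
  interpret C: core V E Hx M0 hs i by (rule Cax)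
  have rep: "f A = gmap M0 hs A" if "finite A" "A \<subseteq> {..<i}" for A
    using that
  proof (induction A rule: finite_induct)
    case empty then show ?case by (simp add: gmap_def UH_def M0_def)
  next
    case (insert j A)
    have j: "j < i" "A \<subseteq> {..<i}" using insert.prems by auto
    have dis: "UH hs A \<inter> hs j = {}"
    proof -
      have "hs l \<inter> hs j = {}" if "l \<in> A" for l using C.edisj[of l j] that j insert.hyps(2) by blast
      then show ?thesis by (auto simp: UH_def)
    qed
    have "f (insert j A) = sd (f A) (hs j)" using step insert j by blast
    also have "\<dots> = sd M0 (sd (UH hs A) (hs j))" using insert.IH j by (simp add: gmap_def sd_assoc)
    also have "\<dots> = sd M0 (UH hs (insert j A))" using sd_disj[OF dis] by (simp add: UH_def Un_commute)
    finally show ?case by (simp add: gmap_def)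
  qed
  have "S = f ` Pow {..<i}" using bij by (simp add: bij_betw_def)
  also have "\<dots> = gmap M0 hs ` Pow {..<i}"
  proof (rule image_cong)
    fix A assume "A \<in> Pow {..<i}"
    then have "A \<subseteq> {..<i}" "finite A" using finite_subset[of A "{..<i}"] by auto
    then show "f A = gmap M0 hs A" using rep by blast
  qed simp
  finally show ?thesis using Cax by blast
qed

end



context hsys begin

lemma cc_core:
  assumes cc: "clar_cover V E Hx F"
  shows "\<exists>M0 hs. core V E Hx M0 hs (card (hex_components V Hx F)) \<and>
                F = FFof M0 hs (card (hex_components V Hx F))"
proof -
  define Hs where "Hs = hex_components V Hx F"
  define k where "k = card Hs"
  have FE: "F \<subseteq> E" using cc by (simp add: clar_cover_def)
  have ccv: "(comp_edges F v \<in> Hx \<and> comp_verts F v = \<Union>(comp_edges F v)) \<or>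
       (\<exists>a b. a \<noteq> b \<and> comp_verts F v = {a,b} \<and> comp_edges F v = {{a,b}})" if "v \<in> V" for v
    using cc that by (simp add: clar_cover_def)
  have HsHx: "Hs \<subseteq> Hx" unfolding Hs_def hex_components_def by blast
  have finHs: "finite Hs" using HsHx Hfin finite_subset by blast
  have ce_F: "comp_edges F v \<subseteq> F" for v by (auto simp: comp_edges_def)
  have edge_in: "e \<in> comp_edges F v" if ein: "e \<in> F" "v \<in> e" for e v
  proof -
    obtain x y where "e = {x,y}" using E2 FE ein(1) by blast
    then show ?thesis by (rule edge_in_ce[OF ein(1) _ ein(2)])
  qed
  have HsX: "comp_edges F u = h \<and> comp_verts F u = \<Union>h" if hh: "h \<in> Hs" "u \<in> \<Union>h" for h u
  proof -
    obtain w where w: "w \<in> V" "h = comp_edges F w" "h \<in> Hx"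
      using hh(1) by (auto simp: Hs_def hex_components_def)
    have cvw: "comp_verts F w = \<Union>h"
    proof -
      from ccv[OF w(1)] show ?thesis
      proof
        assume "comp_edges F w \<in> Hx \<and> comp_verts F w = \<Union>(comp_edges F w)"
        then show ?thesis using w(2) by simp
      next
        assume "\<exists>a b. a \<noteq> b \<and> comp_verts F w = {a,b} \<and> comp_edges F w = {{a,b}}"
        then obtain a b where "comp_edges F w = {{a,b}}" by blast
        then have "card h = 1" using w(2) by simp
        then show ?thesis using hex_card6[OF w(3)] by simp
      qed
    qed
    have "u \<in> comp_verts F w" using cvw hh(2) by simp
    then show ?thesis using cv_sym[of u F w] ce_sym[of u F w] w(2) cvw by simp
  qed
  have hs_edges: "e \<in> h" if "h \<in> Hs" "u \<in> \<Union>h" "e \<in> F" "u \<in> e" for h u e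
    using HsX[OF that(1,2)] edge_in[OF that(3,4)] by simp
  have Hs_disj: "h = h'" if "h \<in> Hs" "h' \<in> Hs" "u \<in> \<Union>h" "u \<in> \<Union>h'" for h h' u
    using HsX[OF that(1,3)] HsX[OF that(2,4)] by simp
  have HsF: "\<Union>Hs \<subseteq> F" by (auto simp: Hs_def hex_components_def comp_edges_def)
  have K2: "\<exists>a b. a \<noteq> b \<and> comp_verts F v = {a,b} \<and> comp_edges F v = {{a,b}}"
    if "v \<in> V" "\<forall>h\<in>Hs. v \<notin> \<Union>h" for v
  proof -
    from ccv[OF that(1)] show ?thesis
    proof
      assume H: "comp_edges F v \<in> Hx \<and> comp_verts F v = \<Union>(comp_edges F v)"
      then have "comp_edges F v \<in> Hs" using that(1) by (auto simp: Hs_def hex_components_def)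
      moreover have "v \<in> \<Union>(comp_edges F v)" using H cv_self[of v F] by simp
      ultimately show ?thesis using that(2) by blast
    qed
  qed
  define P :: "'a set set \<Rightarrow> 'a set set" where "P h = (SOME N. alt h N)" for h
  have altP: "alt h (P h)" if "h \<in> Hx" for h
    unfolding P_def using someI_ex[OF hex_alt_ex[OF Hhex[OF that]]] .
  have Ph: "P h \<subseteq> h" if "h \<in> Hx" for h using altP[OF that] by (simp add: alt_def)
  define K where "K = F - \<Union>Hs"
  define M0 where "M0 = K \<union> \<Union>(P ` Hs)"
  obtain hs where hsb: "bij_betw hs {..<k} Hs"
    using ex_bij_betw_nat_finite[OF finHs] unfolding k_def atLeast0LessThan by blast
  have hsim: "hs ` {..<k} = Hs" using hsb by (simp add: bij_betw_def)
  have hsinj: "inj_on hs {..<k}" using hsb by (simp add: bij_betw_def)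
  have K_not: "u \<notin> \<Union>h" if "e \<in> K" "u \<in> e" "h \<in> Hs" for e u h
    using hs_edges[of h u e] that by (auto simp: K_def)
  have M0E: "M0 \<subseteq> E"
  proof -
    have "K \<subseteq> E" using FE by (auto simp: K_def)
    moreover have "\<Union>(P ` Hs) \<subseteq> E"
    proof
      fix x assume "x \<in> \<Union>(P ` Hs)"
      then obtain h where hx: "h \<in> Hs" "x \<in> P h" by blast
      then have "h \<in> Hx" using HsHx by blast
      then show "x \<in> E" using Ph[of h] HE[of h] hx(2) by blast
    qed
    ultimately show ?thesis by (simp add: M0_def)
  qed
  have G1: "perfect_matching V E M0"
    unfolding perfect_matching_def
  proof (intro conjI ballI)
    show "M0 \<subseteq> E" by (rule M0E)
    fix v assume vV: "v \<in> V"
    show "\<exists>!e. e \<in> M0 \<and> v \<in> e"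
    proof (cases "\<exists>h\<in>Hs. v \<in> \<Union>h")
      case True
      then obtain h where h: "h \<in> Hs" "v \<in> \<Union>h" by blast
      have hH: "h \<in> Hx" using h HsHx by blast
      have A: "\<forall>w\<in>\<Union>h. \<exists>!e. e \<in> P h \<and> w \<in> e" using altP[OF hH] unfolding alt_def by (rule conjunct2)
      have ex1: "\<exists>!e. e \<in> P h \<and> v \<in> e" using A h(2) by (rule bspec)
      then obtain e where e1: "e \<in> P h \<and> v \<in> e" and eu: "\<forall>y. y \<in> P h \<and> v \<in> y \<longrightarrow> y = e"
        by (erule ex1E)
      have e: "e \<in> P h" "v \<in> e" using e1 by (rule conjunct1, rule conjunct2)
      have eu': "y = e" if "y \<in> P h" "v \<in> y" for y using eu that by blast
      have "e \<in> M0" using e(1) h(1) by (auto simp: M0_def)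
      moreover have "x = e" if xx: "x \<in> M0" "v \<in> x" for x
      proof -
        from xx(1) have "x \<in> K \<or> (\<exists>h'\<in>Hs. x \<in> P h')" unfolding M0_def by blast
        then show ?thesis
        proof
          assume xK: "x \<in> K"
          have "v \<notin> \<Union>h" by (rule K_not[OF xK xx(2) h(1)])
          then show ?thesis using h(2) by blast
        next
          assume "\<exists>h'\<in>Hs. x \<in> P h'"
          then obtain h' where h': "h' \<in> Hs" "x \<in> P h'" by blast
          have h'H: "h' \<in> Hx" using HsHx h'(1) by blast
          have xh': "x \<in> h'" using Ph[OF h'H] h'(2) by blast
          have vh': "v \<in> \<Union>h'" using xh' xx(2) by blast
          have "h' = h" by (rule Hs_disj[OF h'(1) h(1) vh' h(2)])
          then show ?thesis using eu'[of x] h'(2) xx(2) by simp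
        qed
      qed
      ultimately show ?thesis using e(2) by blast
    next
      case False
      obtain a b where ab: "a \<noteq> b" "comp_verts F v = {a,b}" "comp_edges F v = {{a,b}}"
        using K2[OF vV] False by blast
      have abF: "{a,b} \<in> F" using ab(3) ce_F by blast
      have vab: "v \<in> {a,b}" using ab(2) cv_self[of v F] by simp
      have "{a,b} \<notin> \<Union>Hs" using False vab by blast
      then have abM: "{a,b} \<in> M0" using abF by (auto simp: M0_def K_def)
      moreover have "x = {a,b}" if xx: "x \<in> M0" "v \<in> x" for x
      proof -
        have "x \<notin> \<Union>(P ` Hs)" using False xx(2) Ph HsHx by blast
        then have "x \<in> F" using xx(1) by (auto simp: M0_def K_def)
        then have "x \<in> comp_edges F v" using edge_in xx(2) by blast
        then show ?thesis using ab(3) by simp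
      qed
      ultimately show ?thesis using vab by blast
    qed
  qed
  have hsHs: "hs j \<in> Hs" if "j < k" for j using hsim that by blast
  have G2: "hs j \<in> Hx" if "j < k" for j using hsHs[OF that] HsHx by blast
  have G3: "\<Union>(hs j) \<inter> \<Union>(hs l) = {}" if "j < k" "l < k" "j \<noteq> l" for j l
  proof -
    have "hs j \<noteq> hs l" using hsinj that by (auto simp: inj_on_def)
    then show ?thesis using Hs_disj[OF hsHs[OF that(1)] hsHs[OF that(2)]] by blast
  qed
  have G4: "e \<in> hs j" if gg: "j < k" "e \<in> M0" "v \<in> \<Union>(hs j)" "v \<in> e" for j e v
  proof -
    from gg(2) have "e \<in> K \<or> (\<exists>h'\<in>Hs. e \<in> P h')" by (auto simp: M0_def)
    then show ?thesis
    proof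
      assume "e \<in> K" then show ?thesis using K_not[of e v "hs j"] gg hsHs by blast
    next
      assume "\<exists>h'\<in>Hs. e \<in> P h'"
      then obtain h' where h': "h' \<in> Hs" "e \<in> P h'" by blast
      have eh: "e \<in> h'" using Ph h' HsHx by blast
      then have "h' = hs j" using Hs_disj[OF h'(1) hsHs[OF gg(1)] _ gg(3)] gg(4) by blast
      then show ?thesis using eh by simp
    qed
  qed
  have Cax: "core V E Hx M0 hs k"
    apply (rule core.intro[OF hsys_axioms])
    apply (rule core_axioms.intro)
       apply (rule G1)
      apply (erule G2)
     apply (erule (2) G3)
    apply (erule (3) G4)
    done
  have "UH hs {..<k} = \<Union>Hs" using hsim by (simp add: UH_def)
  moreover have "M0 \<union> \<Union>Hs = F"
  proof
    show "M0 \<union> \<Union>Hs \<subseteq> F" using HsF Ph HsHx by (auto simp: M0_def K_def)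
    show "F \<subseteq> M0 \<union> \<Union>Hs" by (auto simp: M0_def K_def)
  qed
  ultimately have "F = FFof M0 hs k" by (simp add: FFof_def)
  then show ?thesis using Cax unfolding k_def Hs_def by blast
qed

theorem main_thm: "clar_number_z V E Hx i = cube_count (res_verts V E) (res_adj Hx) i"
proof -
  let ?CC = "{F. clar_cover V E Hx F \<and> card (hex_components V Hx F) = i}"
  let ?CU = "{S. S \<subseteq> res_verts V E \<and> (\<exists>f. bij_betw f (Pow {..<i}) S \<and>
      (\<forall>A\<in>Pow {..<i}. \<forall>B\<in>Pow {..<i}. cube_adj A B \<longleftrightarrow> res_adj Hx (f A) (f B)))}"
  let ?Phi = "\<lambda>F. {M. perfect_matching V E M \<and> M \<subseteq> F}"
  have bkw: "\<Union>(?Phi F) = F" if FC: "F \<in> ?CC" for F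
  proof -
    obtain M0 hs where c: "core V E Hx M0 hs i" "F = FFof M0 hs i" using cc_core[of F] FC by auto
    interpret C: core V E Hx M0 hs i by (rule c(1))
    show ?thesis using C.pms_FF C.union_g c(2) by simp
  qed
  have "bij_betw ?Phi ?CC ?CU"
  proof (rule bij_betw_imageI)
    show "inj_on ?Phi ?CC" by (rule inj_on_inverseI[where g=Union]) (rule bkw)
    show "?Phi ` ?CC = ?CU"
    proof
      show "?Phi ` ?CC \<subseteq> ?CU"
      proof
        fix S assume "S \<in> ?Phi ` ?CC"
        then obtain F where F: "F \<in> ?CC" "S = ?Phi F" by blast
        obtain M0 hs where c: "core V E Hx M0 hs i" "F = FFof M0 hs i" using cc_core[of F] F(1) by auto
        interpret C: core V E Hx M0 hs i by (rule c(1))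
        show "S \<in> ?CU" using C.cube F(2) c(2) by simp
      qed
    next
      show "?CU \<subseteq> ?Phi ` ?CC"
      proof
        fix S assume "S \<in> ?CU"
        then obtain f where S: "S \<subseteq> res_verts V E" "bij_betw f (Pow {..<i}) S"
          "\<forall>A\<in>Pow {..<i}. \<forall>B\<in>Pow {..<i}. cube_adj A B \<longleftrightarrow> res_adj Hx (f A) (f B)" by blast
        obtain M0 hs where c: "core V E Hx M0 hs i" "S = gmap M0 hs ` Pow {..<i}"
          using cube_core[OF S] by blast
        interpret C: core V E Hx M0 hs i by (rule c(1))
        have "FFof M0 hs i \<in> ?CC" using C.FF_clar C.card_hexcomp by simp
        moreover have "S = ?Phi (FFof M0 hs i)" using C.pms_FF c(2) by simp
        ultimately show "S \<in> ?Phi ` ?CC" by blast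
      qed
    qed
  qed
  then have "card ?CC = card ?CU" by (rule bij_betw_same_card)
  then show ?thesis by (simp add: clar_number_z_def cube_count_def)
qed

end



lemma hex_edges_xy: "hex_edges (x,y) =
     {{(x,y),(x+1,y)}, {(x+1,y),(x+2,y)}, {(x,y+1),(x+1,y+1)}, {(x+1,y+1),(x+2,y+1)},
      {(x,y),(x,y+1)}, {(x+2,y),(x+2,y+1)}}" by (simp add: hex_edges_def)

lemma hex_cases: "e \<in> hex_edges (x,y) \<Longrightarrow> e = {(x,y),(x+1,y)} \<or> e = {(x+1,y),(x+2,y)} \<or>
   e = {(x,y+1),(x+1,y+1)} \<or> e = {(x+1,y+1),(x+2,y+1)} \<or> e = {(x,y),(x,y+1)} \<or> e = {(x+2,y),(x+2,y+1)}"
  by (simp add: hex_edges_xy)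

lemma off20: assumes "e \<in> hex_edges (x,y)" "e \<in> hex_edges (x+2,y)" shows "e = {(x+2,y),(x+2,y+1)}"
  using hex_cases[OF assms(1)] assms(2) by (elim disjE) (simp_all add: hex_edges_xy doubleton_eq_iff)

lemma off11: assumes "e \<in> hex_edges (x,y)" "e \<in> hex_edges (x+1,y+1)" shows "e = {(x+1,y+1),(x+2,y+1)}"
  using hex_cases[OF assms(1)] assms(2) by (elim disjE) (simp_all add: hex_edges_xy doubleton_eq_iff)

lemma off1m: assumes "e \<in> hex_edges (x,y)" "e \<in> hex_edges (x+1,y-1)" shows "e = {(x+1,y),(x+2,y)}"
  using hex_cases[OF assms(1)] assms(2) by (elim disjE) (simp_all add: hex_edges_xy doubleton_eq_iff)

lemma box: assumes "e \<in> hex_edges (x,y)" "p \<in> e" shows "x \<le> fst p \<and> fst p \<le> x+2 \<and> y \<le> snd p \<and> snd p \<le> y+1"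
  using hex_cases[OF assms(1)] assms(2) by auto

lemma nbr:
  assumes "e \<in> hex_edges (x,y)" "e \<in> hex_edges (x',y')" "even (x+y)" "even (x'+y')"
  shows "(x',y') = (x,y) \<or> (x',y') = (x+2,y) \<or> (x',y') = (x-2,y) \<or> (x',y') = (x+1,y+1) \<or>
         (x',y') = (x-1,y+1) \<or> (x',y') = (x+1,y-1) \<or> (x',y') = (x-1,y-1)"
proof -
  obtain p where p: "p \<in> e" using hex_cases[OF assms(1)] by auto
  have b1: "x \<le> fst p \<and> fst p \<le> x+2 \<and> y \<le> snd p \<and> snd p \<le> y+1" using box[OF assms(1) p] .
  have b2: "x' \<le> fst p \<and> fst p \<le> x'+2 \<and> y' \<le> snd p \<and> snd p \<le> y'+1" using box[OF assms(2) p] .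
  have "x' - x \<le> 2" "x - x' \<le> 2" "y' - y \<le> 1" "y - y' \<le> 1" using b1 b2 by auto
  then have "(x' = x \<and> y' = y) \<or> (x' = x+2 \<and> y' = y) \<or> (x' = x-2 \<and> y' = y) \<or> (x' = x+1 \<and> y' = y+1) \<or>
         (x' = x-1 \<and> y' = y+1) \<or> (x' = x+1 \<and> y' = y-1) \<or> (x' = x-1 \<and> y' = y-1)"
    using assms(3,4) by presburger
  then show ?thesis by auto
qed


lemma hex_is_hex: "is_hex (hex_edges c)"
proof -
  obtain x y where c: "c = (x,y)" by (cases c)
  have d: "distinct [(x,y),(x+1,y),(x+2,y),(x+2,y+1),(x+1,y+1),(x,y+1)]" by auto
  have "hex_edges c = {{(x,y),(x+1,y)},{(x+1,y),(x+2,y)},{(x+2,y),(x+2,y+1)},{(x+2,y+1),(x+1,y+1)},{(x+1,y+1),(x,y+1)},{(x,y+1),(x,y)}}"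
    unfolding c hex_edges_xy by (simp add: insert_commute)
  then show ?thesis unfolding is_hex_def using d by blast
qed

lemma share:
  assumes cl: "is_cell c" "is_cell c'" and ne: "c \<noteq> c'"
    and e: "e1 \<in> hex_edges c" "e1 \<in> hex_edges c'" "e2 \<in> hex_edges c" "e2 \<in> hex_edges c'"
  shows "e1 = e2"
proof -
  obtain x y where c: "c = (x,y)" by (cases c)
  obtain x' y' where c': "c' = (x',y')" by (cases c')
  have ev: "even (x+y)" "even (x'+y')" using cl c c' by (auto simp: is_cell_def)
  have e': "e1 \<in> hex_edges (x,y)" "e1 \<in> hex_edges (x',y')" "e2 \<in> hex_edges (x,y)" "e2 \<in> hex_edges (x',y')"
    using e c c' by auto
  have "(x',y') \<noteq> (x,y)" using ne c c' by auto
  then have "(x',y') = (x+2,y) \<or> (x',y') = (x-2,y) \<or> (x',y') = (x+1,y+1) \<or>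
         (x',y') = (x-1,y+1) \<or> (x',y') = (x+1,y-1) \<or> (x',y') = (x-1,y-1)"
    using nbr[OF e'(1,2) ev] by blast
  then show ?thesis
  proof (elim disjE)
    assume "(x',y') = (x+2,y)"
    then have "x' = x+2" "y' = y" by auto
    then show ?thesis using off20[OF e'(1)] off20[OF e'(3)] e'(2,4) by simp
  next
    assume "(x',y') = (x-2,y)"
    then have "x = x'+2" "y = y'" by auto
    then show ?thesis using off20[OF e'(2)] off20[OF e'(4)] e'(1,3) by simp
  next
    assume "(x',y') = (x+1,y+1)"
    then have "x' = x+1" "y' = y+1" by auto
    then show ?thesis using off11[OF e'(1)] off11[OF e'(3)] e'(2,4) by simp
  next
    assume "(x',y') = (x-1,y+1)"
    then have "x = x'+1" "y = y'-1" by auto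
    then show ?thesis using off1m[OF e'(2)] off1m[OF e'(4)] e'(1,3) by simp
  next
    assume "(x',y') = (x+1,y-1)"
    then have "x' = x+1" "y' = y-1" by auto
    then show ?thesis using off1m[OF e'(1)] off1m[OF e'(3)] e'(2,4) by simp
  next
    assume "(x',y') = (x-1,y-1)"
    then have "x = x'+1" "y = y'+1" by auto
    then show ?thesis using off11[OF e'(2)] off11[OF e'(4)] e'(1,3) by simp
  qed
qed

lemma cyc_fin: "finite (cyc_edges vs)"
proof -
  have "cyc_edges vs = (\<lambda>i. {vs ! i, vs ! ((i + 1) mod length vs)}) ` {..<length vs}"
    by (auto simp: cyc_edges_def)
  then show ?thesis by simp
qed

lemma cells_of_edge_fin: assumes "p \<in> e" shows "finite {c. e \<in> hex_edges c}"
proof -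
  have "{c. e \<in> hex_edges c} \<subseteq> (\<lambda>(dx,dy). (fst p - dx, snd p - dy)) ` ({0,1,2} \<times> {0,1})"
  proof
    fix c assume "c \<in> {c. e \<in> hex_edges c}"
    then have ec: "e \<in> hex_edges c" by simp
    obtain x y where c: "c = (x,y)" by (cases c)
    have b: "x \<le> fst p \<and> fst p \<le> x+2 \<and> y \<le> snd p \<and> snd p \<le> y+1" using box[OF ec[unfolded c] assms] .
    then have m: "(fst p - x, snd p - y) \<in> {0,1,2} \<times> {0,1}" by auto
    have "c = (\<lambda>(dx,dy). (fst p - dx, snd p - dy)) (fst p - x, snd p - y)" using c by simp
    then show "c \<in> (\<lambda>(dx,dy). (fst p - dx, snd p - dy)) ` ({0,1,2} \<times> {0,1})" using m by blast
  qed
  then show ?thesis by (rule finite_subset) simp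
qed

lemma cell_step_sym: "cell_step C a b \<Longrightarrow> cell_step C b a" by (auto simp: cell_step_def)

lemma cs_rt_sym: assumes "(cell_step C)\<^sup>*\<^sup>* a b" shows "(cell_step C)\<^sup>*\<^sup>* b a"
  using assms
proof (induction rule: rtranclp_induct)
  case base then show ?case by simp
next
  case (step y z)
  then show ?case using cell_step_sym converse_rtranclp_into_rtranclp by metis
qed

lemma cs_rt_cell: "(cell_step C)\<^sup>*\<^sup>* a b \<Longrightarrow> is_cell a \<Longrightarrow> is_cell b"
  by (induction rule: rtranclp_induct) (auto simp: cell_step_def)

lemma inner_touch: assumes ih: "inner_cell C h"
  shows "\<exists>b. (cell_step C)\<^sup>*\<^sup>* h b \<and> is_cell b \<and> hex_edges b \<inter> C \<noteq> {}"
proof -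
  define R where "R = {h'. (cell_step C)\<^sup>*\<^sup>* h h'}"
  have fR: "finite R" using ih by (simp add: inner_cell_def R_def)
  have hR: "h \<in> R" by (simp add: R_def)
  define m where "m = Max (fst ` R)"
  have "m \<in> fst ` R" using fR hR unfolding m_def by (intro Max_in) auto
  then obtain b where bR: "b \<in> R" and bm: "fst b = m" by auto
  have maxb: "fst b' \<le> m" if "b' \<in> R" for b' using fR that unfolding m_def by (intro Max_ge) auto
  have bc: "is_cell b" using bR ih cs_rt_cell by (auto simp: R_def inner_cell_def)
  obtain x y where b: "b = (x,y)" by (cases b)
  have s1: "{(x+2,y),(x+2,y+1)} \<in> hex_edges b" by (simp add: b hex_edges_xy)
  have s2: "{(x+2,y),(x+2,y+1)} \<in> hex_edges (x+2,y)" by (simp add: hex_edges_xy)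
  have cc: "is_cell (x+2,y)" using bc b by (simp add: is_cell_def)
  have sC: "{(x+2,y),(x+2,y+1)} \<in> C"
  proof (rule ccontr)
    assume nC: "{(x+2,y),(x+2,y+1)} \<notin> C"
    have "b \<noteq> (x+2,y)" using b by simp
    then have "cell_step C b (x+2,y)" unfolding cell_step_def using s1 s2 bc cc nC by blast
    then have "(x+2,y) \<in> R" using bR by (auto simp: R_def intro: rtranclp.rtrancl_into_rtrancl)
    then have "x + 2 \<le> m" using maxb by fastforce
    then show False using bm b by simp
  qed
  have "(cell_step C)\<^sup>*\<^sup>* h b" using bR by (simp add: R_def)
  then show ?thesis using bc s1 sC by blast
qed

lemma inner_fin: assumes fC: "finite C" and neC: "\<And>e. e \<in> C \<Longrightarrow> e \<noteq> {}"
  shows "finite {h. inner_cell C h}"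
proof -
  define B where "B = {c. is_cell c \<and> hex_edges c \<inter> C \<noteq> {}}"
  have fB: "finite B"
  proof -
    have "B \<subseteq> (\<Union>e\<in>C. {c. e \<in> hex_edges c})" by (auto simp: B_def)
    moreover have "finite (\<Union>e\<in>C. {c. e \<in> hex_edges c})"
    proof (rule finite_UN_I[OF fC])
      fix e assume "e \<in> C"
      then obtain p where "p \<in> e" using neC by blast
      then show "finite {c. e \<in> hex_edges c}" by (rule cells_of_edge_fin)
    qed
    ultimately show ?thesis by (rule finite_subset)
  qed
  let ?U = "\<Union>b\<in>{b\<in>B. finite {h'. (cell_step C)\<^sup>*\<^sup>* b h'}}. {h'. (cell_step C)\<^sup>*\<^sup>* b h'}"
  have "{h. inner_cell C h} \<subseteq> ?U"
  proof
    fix h assume "h \<in> {h. inner_cell C h}"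
    then have ih: "inner_cell C h" by simp
    obtain b where b: "(cell_step C)\<^sup>*\<^sup>* h b" "is_cell b" "hex_edges b \<inter> C \<noteq> {}"
      using inner_touch[OF ih] by blast
    have bB: "b \<in> B" using b by (simp add: B_def)
    have hb: "(cell_step C)\<^sup>*\<^sup>* b h" using cs_rt_sym[OF b(1)] .
    have "{h'. (cell_step C)\<^sup>*\<^sup>* b h'} \<subseteq> {h'. (cell_step C)\<^sup>*\<^sup>* h h'}"
      using b(1) by (auto intro: rtranclp_trans)
    then have "finite {h'. (cell_step C)\<^sup>*\<^sup>* b h'}" using ih by (auto simp: inner_cell_def intro: finite_subset)
    then show "h \<in> ?U" using bB hb by blast
  qed
  moreover have "finite ?U" using fB by (intro finite_UN_I) auto
  ultimately show ?thesis by (rule finite_subset)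
qed

lemma lat_adj_neq: "lat_adj u v \<Longrightarrow> u \<noteq> v"
  by (cases u, cases v) (auto simp: lat_adj_def)

lemma hsys_inst: assumes lc: "lattice_cycle vs" shows "hsys (hs_V vs) (hs_E vs) (hs_hex vs)"
proof (rule hsys.intro)
  have cyc2: "\<exists>x y. x \<noteq> y \<and> e = {x,y}" if ec: "e \<in> cyc_edges vs" for e
  proof -
    obtain i where i: "i < length vs" "e = {vs ! i, vs ! ((i + 1) mod length vs)}"
      using ec by (auto simp: cyc_edges_def)
    have "lat_adj (vs ! i) (vs ! ((i + 1) mod length vs))" using lc i(1) by (simp add: lattice_cycle_def)
    then show ?thesis using i(2) lat_adj_neq by blast
  qed
  have hexE: "h \<in> hs_hex vs \<Longrightarrow> \<exists>c. inner_cell (cyc_edges vs) c \<and> h = hex_edges c" for h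
    by (auto simp: hs_hex_def)
  show "\<And>e. e \<in> hs_E vs \<Longrightarrow> \<exists>x y. x \<noteq> y \<and> e = {x,y}"
  proof -
    fix e assume "e \<in> hs_E vs"
    then have "e \<in> cyc_edges vs \<or> (\<exists>c. e \<in> hex_edges c)" by (auto simp: hs_E_def hs_hex_def)
    then show "\<exists>x y. x \<noteq> y \<and> e = {x,y}" using cyc2 hex_edge2[OF hex_is_hex] by blast
  qed
  show "\<And>e. e \<in> hs_E vs \<Longrightarrow> e \<subseteq> hs_V vs" by (auto simp: hs_V_def)
  show "\<And>h. h \<in> hs_hex vs \<Longrightarrow> is_hex h" using hexE hex_is_hex by blast
  show "\<And>h. h \<in> hs_hex vs \<Longrightarrow> h \<subseteq> hs_E vs" by (auto simp: hs_E_def)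
  show "\<And>h h'. h \<in> hs_hex vs \<Longrightarrow> h' \<in> hs_hex vs \<Longrightarrow> h \<noteq> h' \<Longrightarrow> card (h \<inter> h') \<le> 1"
  proof -
    fix h h' assume h: "h \<in> hs_hex vs" "h' \<in> hs_hex vs" "h \<noteq> h'"
    obtain c where c: "inner_cell (cyc_edges vs) c" "h = hex_edges c" using hexE h(1) by blast
    obtain c' where c': "inner_cell (cyc_edges vs) c'" "h' = hex_edges c'" using hexE h(2) by blast
    have cl: "is_cell c" "is_cell c'" using c c' by (auto simp: inner_cell_def)
    have ne: "c \<noteq> c'" using h(3) c c' by auto
    have fin: "finite (h \<inter> h')" using c(2) hex_card(1)[OF hex_is_hex] by blast
    have "\<forall>a1\<in>h \<inter> h'. \<forall>a2\<in>h \<inter> h'. a1 = a2" using share[OF cl ne] c(2) c'(2) by blast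
    then show "card (h \<inter> h') \<le> 1" using card_le_Suc0_iff_eq[OF fin] by simp
  qed
  show "finite (hs_hex vs)"
  proof -
    have "\<And>e. e \<in> cyc_edges vs \<Longrightarrow> e \<noteq> {}" using cyc2 by blast
    then have "finite {h. inner_cell (cyc_edges vs) h}" using inner_fin cyc_fin by blast
    then show ?thesis by (simp add: hs_hex_def)
  qed
qed

theorem theorem1:
  fixes vs :: "vert list"
  assumes "lattice_cycle vs"
    and "kekulean (hs_V vs) (hs_E vs)"
  shows "\<forall>i. clar_number_z (hs_V vs) (hs_E vs) (hs_hex vs) i
             = cube_count (res_verts (hs_V vs) (hs_E vs)) (res_adj (hs_hex vs)) i"
proof
  fix i
  interpret H: hsys "hs_V vs" "hs_E vs" "hs_hex vs" using hsys_inst[OF assms(1)] .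
  show "clar_number_z (hs_V vs) (hs_E vs) (hs_hex vs) i
             = cube_count (res_verts (hs_V vs) (hs_E vs)) (res_adj (hs_hex vs)) i"
    by (rule H.main_thm)
qed


end
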